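(* Let $\mathcal{G}$ be an ultragraph, $R$ a unital commutative ring, and $\{R_e,D_A,f_e\}_{e\in\mathcal{G}^1,A\in\mathcal{G}^0}$ a $\mathcal{G}$-algebraic branching system on a set $X$. Let $M$ be the $R$-module of all maps $X\to R$. Then there exists a unique $R$-algebra homomorphism $\pi:L_R(\mathcal{G})\to \mathrm{Hom}_R(M)$ such that, for each $e\in\mathcal{G}^1$, $A\in\mathcal{G}^0$ and $\phi\in M$: $\pi(s_e)(\phi)=(\phi\circ f_e^{-1})\cdot 1_{R_e}$, $\pi(s_e^* )(\phi)=(\phi\circ f_e)\cdot 1_{D_{r(e)}}$ and $\pi(p_A)(\phi)=1_{D_A}\phi$. Here $(\phi\circ f_e^{-1})\cdot 1_{R_e}$ denotes the map that equals $\phi(f_e^{-1}(x))$ at $x\in R_e$ and $0$ elsewhere, and $(\phi\circ f_e)\cdot 1_{D_{r(e)}}$ the map that equals $\phi(f_e(x))$ at $x\in D_{r(e)}$ and $0$ elsewhere.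
   Context: An ultragraph $\mathcal{G}=(G^0,\mathcal{G}^1,r,s)$ consists of sets $G^0$, $\mathcal{G}^1$, a map $s:\mathcal{G}^1\to G^0$ and a map $r:\mathcal{G}^1\to P(G^0)\setminus\{\emptyset\}$. $\mathcal{G}^0$ is the smallest subset of $P(G^0)$ containing $\{v\}$ ($v\in G^0$) and $r(e)$ ($e\in\mathcal{G}^1$), closed under finite unions and intersections; write $p_v=p_{\{v\}}$, $D_v=D_{\{v\}}$. $L_R(\mathcal{G})$ is the universal $R$-algebra generated by $\{s_e,s_e^*:e\in\mathcal{G}^1\}\cup\{p_A:A\in\mathcal{G}^0\}$ subject to: (1) $p_\emptyset=0$, $p_Ap_B=p_{A\cap B}$, $p_{A\cup B}=p_A+p_B-p_{A\cap B}$; (2) $p_{s(e)}s_e=s_ep_{r(e)}=s_e$, $p_{r(e)}s_e^*=s_e^*p_{s(e)}=s_e^*$; (3) $s_e^*s_f=\delta_{e,f}p_{r(e)}$; (4) $p_v=\sum_{s(e)=v}s_es_e^*$ whenever $0<|s^{-1}(v)|<\infty$. A $\mathcal{G}$-algebraic branching system on $X$ is a family of subsets $R_e,D_A\subseteq X$ and maps $f_e$ with: (i) $R_e\cap R_f=\emptyset$ for $e\neq f$; (ii) $D_\emptyset=\emptyset$, $D_A\cap D_B=D_{A\cap B}$, $D_A\cup D_B=D_{A\cup B}$; (iii) $R_e\subseteq D_{s(e)}$; (iv) $D_v=\bigcup_{e\in s^{-1}(v)}R_e$ whenever $0<|s^{-1}(v)|<\infty$; (v) $f_e:D_{r(e)}\to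 R_e$ is a bijection with inverse $f_e^{-1}$. $1_Y$ denotes the characteristic function of $Y\subseteq X$; $\mathrm{Hom}_R(M)$ is the algebra of $R$-module endomorphisms of $M$. *)

theory Defs
  imports Main
begin

definition ultragraph :: "'v set \<Rightarrow> 'e set \<Rightarrow> ('e \<Rightarrow> 'v) \<Rightarrow> ('e \<Rightarrow> 'v set) \<Rightarrow> bool" where
  "ultragraph V E s r \<longleftrightarrow> (\<forall>e\<in>E. s e \<in> V \<and> r e \<subseteq> V \<and> r e \<noteq> {})"

inductive_set gzero :: "'v set \<Rightarrow> 'e set \<Rightarrow> ('e \<Rightarrow> 'v set) \<Rightarrow> 'v set set"
  for V :: "'v set" and E :: "'e set" and r :: "'e \<Rightarrow> 'v set" where
  gz_vertex: "v \<in> V \<Longrightarrow> {v} \<in> gzero V E r"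
| gz_range: "e \<in> E \<Longrightarrow> r e \<in> gzero V E r"
| gz_empty: "{} \<in> gzero V E r"
| gz_union: "A \<in> gzero V E r \<Longrightarrow> B \<in> gzero V E r \<Longrightarrow> A \<union> B \<in> gzero V E r"
| gz_inter: "A \<in> gzero V E r \<Longrightarrow> B \<in> gzero V E r \<Longrightarrow> A \<inter> B \<in> gzero V E r"

datatype ('v, 'e) ugen = GS 'e | GSstar 'e | GP "'v set"

definition valid_gen :: "'v set \<Rightarrow> 'e set \<Rightarrow> ('e \<Rightarrow> 'v set) \<Rightarrow> ('v, 'e) ugen \<Rightarrow> bool" where
  "valid_gen V E r g = (case g of GS e \<Rightarrow> e \<in> E | GSstar e \<Rightarrow> e \<in> E | GP A \<Rightarrow> A \<in> gzero V E r)"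

text \<open>Elements of the free non-unital algebra: finitely supported R-valued functions on
nonempty words over the generators.\<close>

definition lp_free :: "'v set \<Rightarrow> 'e set \<Rightarrow> ('e \<Rightarrow> 'v set)
    \<Rightarrow> (('v, 'e) ugen list \<Rightarrow> 'r::comm_ring_1) set" where
  "lp_free V E r = {a. finite {w. a w \<noteq> 0} \<and> a [] = 0 \<and>
      (\<forall>w. a w \<noteq> 0 \<longrightarrow> (\<forall>g\<in>set w. valid_gen V E r g))}"

definition fa_zero :: "'g list \<Rightarrow> 'r::comm_ring_1" where
  "fa_zero = (\<lambda>w. 0)"

definition fa_add :: "('g list \<Rightarrow> 'r::comm_ring_1) \<Rightarrow> ('g list \<Rightarrow> 'r) \<Rightarrow> 'g list \<Rightarrow> 'r" where
  "fa_add a b = (\<lambda>w. a w + b w)"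

definition fa_sub :: "('g list \<Rightarrow> 'r::comm_ring_1) \<Rightarrow> ('g list \<Rightarrow> 'r) \<Rightarrow> 'g list \<Rightarrow> 'r" where
  "fa_sub a b = (\<lambda>w. a w - b w)"

definition fa_smult :: "'r::comm_ring_1 \<Rightarrow> ('g list \<Rightarrow> 'r) \<Rightarrow> 'g list \<Rightarrow> 'r" where
  "fa_smult c a = (\<lambda>w. c * a w)"

text \<open>Concatenation product (words of length at least one on each side).\<close>

definition fa_mult :: "('g list \<Rightarrow> 'r::comm_ring_1) \<Rightarrow> ('g list \<Rightarrow> 'r) \<Rightarrow> 'g list \<Rightarrow> 'r" where
  "fa_mult a b = (\<lambda>w. \<Sum>i\<in>{1..<length w}. a (take i w) * b (drop i w))"

definition fa_gen :: "'g \<Rightarrow> 'g list \<Rightarrow> 'r::comm_ring_1" where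
  "fa_gen g = (\<lambda>w. if w = [g] then 1 else 0)"

definition lp_rels :: "'v set \<Rightarrow> 'e set \<Rightarrow> ('e \<Rightarrow> 'v) \<Rightarrow> ('e \<Rightarrow> 'v set)
    \<Rightarrow> (('v, 'e) ugen list \<Rightarrow> 'r::comm_ring_1) set" where
  "lp_rels V E s r =
     {fa_gen (GP {})}
   \<union> {fa_sub (fa_mult (fa_gen (GP A)) (fa_gen (GP B))) (fa_gen (GP (A \<inter> B))) | A B.
        A \<in> gzero V E r \<and> B \<in> gzero V E r}
   \<union> {fa_sub (fa_gen (GP (A \<union> B)))
        (fa_sub (fa_add (fa_gen (GP A)) (fa_gen (GP B))) (fa_gen (GP (A \<inter> B)))) | A B.
        A \<in> gzero V E r \<and> B \<in> gzero V E r}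
   \<union> {fa_sub (fa_mult (fa_gen (GP {s e})) (fa_gen (GS e))) (fa_gen (GS e)) | e. e \<in> E}
   \<union> {fa_sub (fa_mult (fa_gen (GS e)) (fa_gen (GP (r e)))) (fa_gen (GS e)) | e. e \<in> E}
   \<union> {fa_sub (fa_mult (fa_gen (GP (r e))) (fa_gen (GSstar e))) (fa_gen (GSstar e)) | e. e \<in> E}
   \<union> {fa_sub (fa_mult (fa_gen (GSstar e)) (fa_gen (GP {s e}))) (fa_gen (GSstar e)) | e. e \<in> E}
   \<union> {fa_sub (fa_mult (fa_gen (GSstar e)) (fa_gen (GS f)))
        (if e = f then fa_gen (GP (r e)) else fa_zero) | e f. e \<in> E \<and> f \<in> E}
   \<union> {fa_sub (fa_gen (GP {v}))
        (\<lambda>w. \<Sum>e\<in>{e\<in>E. s e = v}. fa_mult (fa_gen (GS e)) (fa_gen (GSstar e)) w) | v.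
        v \<in> V \<and> finite {e\<in>E. s e = v} \<and> {e\<in>E. s e = v} \<noteq> {}}"

inductive_set lp_ideal :: "'v set \<Rightarrow> 'e set \<Rightarrow> ('e \<Rightarrow> 'v) \<Rightarrow> ('e \<Rightarrow> 'v set)
    \<Rightarrow> (('v, 'e) ugen list \<Rightarrow> 'r::comm_ring_1) set"
  for V :: "'v set" and E :: "'e set" and s :: "'e \<Rightarrow> 'v" and r :: "'e \<Rightarrow> 'v set" where
  li_rel: "a \<in> lp_rels V E s r \<Longrightarrow> a \<in> lp_ideal V E s r"
| li_zero: "fa_zero \<in> lp_ideal V E s r"
| li_add: "a \<in> lp_ideal V E s r \<Longrightarrow> b \<in> lp_ideal V E s r \<Longrightarrow> fa_add a b \<in> lp_ideal V E s r"
| li_smult: "a \<in> lp_ideal V E s r \<Longrightarrow> fa_smult c a \<in> lp_ideal V E s r"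
| li_lmult: "b \<in> lp_free V E r \<Longrightarrow> a \<in> lp_ideal V E s r \<Longrightarrow> fa_mult b a \<in> lp_ideal V E s r"
| li_rmult: "b \<in> lp_free V E r \<Longrightarrow> a \<in> lp_ideal V E s r \<Longrightarrow> fa_mult a b \<in> lp_ideal V E s r"

definition lp_class :: "'v set \<Rightarrow> 'e set \<Rightarrow> ('e \<Rightarrow> 'v) \<Rightarrow> ('e \<Rightarrow> 'v set)
    \<Rightarrow> (('v, 'e) ugen list \<Rightarrow> 'r::comm_ring_1) \<Rightarrow> (('v, 'e) ugen list \<Rightarrow> 'r) set" where
  "lp_class V E s r a = {b \<in> lp_free V E r. fa_sub a b \<in> lp_ideal V E s r}"

definition LPA :: "'v set \<Rightarrow> 'e set \<Rightarrow> ('e \<Rightarrow> 'v) \<Rightarrow> ('e \<Rightarrow> 'v set)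
    \<Rightarrow> (('v, 'e) ugen list \<Rightarrow> 'r::comm_ring_1) set set" where
  "LPA V E s r = lp_class V E s r ` lp_free V E r"

definition lp_rep :: "'a set \<Rightarrow> 'a" where
  "lp_rep X = (SOME a. a \<in> X)"

definition LPA_add where
  "LPA_add V E s r X Y = lp_class V E s r (fa_add (lp_rep X) (lp_rep Y))"

definition LPA_mult where
  "LPA_mult V E s r X Y = lp_class V E s r (fa_mult (lp_rep X) (lp_rep Y))"

definition LPA_smult where
  "LPA_smult V E s r c X = lp_class V E s r (fa_smult c (lp_rep X))"

definition LPA_s where "LPA_s V E s r e = lp_class V E s r (fa_gen (GS e))"
definition LPA_sstar where "LPA_sstar V E s r e = lp_class V E s r (fa_gen (GSstar e))"
definition LPA_p where "LPA_p V E s r A = lp_class V E s r (fa_gen (GP A))"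

text \<open>The set X is the universe of the type 'x.\<close>

definition branching_system :: "'v set \<Rightarrow> 'e set \<Rightarrow> ('e \<Rightarrow> 'v) \<Rightarrow> ('e \<Rightarrow> 'v set)
    \<Rightarrow> ('e \<Rightarrow> 'x set) \<Rightarrow> ('v set \<Rightarrow> 'x set) \<Rightarrow> ('e \<Rightarrow> 'x \<Rightarrow> 'x) \<Rightarrow> bool" where
  "branching_system V E s r RR D f \<longleftrightarrow>
     (\<forall>e\<in>E. \<forall>e'\<in>E. e \<noteq> e' \<longrightarrow> RR e \<inter> RR e' = {})
   \<and> D {} = {}
   \<and> (\<forall>A\<in>gzero V E r. \<forall>B\<in>gzero V E r. D A \<inter> D B = D (A \<inter> B) \<and> D A \<union> D B = D (A \<union> B))
   \<and> (\<forall>e\<in>E. RR e \<subseteq> D {s e})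
   \<and> (\<forall>v\<in>V. finite {e\<in>E. s e = v} \<and> {e\<in>E. s e = v} \<noteq> {}
          \<longrightarrow> D {v} = (\<Union>e\<in>{e\<in>E. s e = v}. RR e))
   \<and> (\<forall>e\<in>E. bij_betw (f e) (D (r e)) (RR e))"

definition is_endo :: "(('x \<Rightarrow> 'r::comm_ring_1) \<Rightarrow> ('x \<Rightarrow> 'r)) \<Rightarrow> bool" where
  "is_endo T \<longleftrightarrow> (\<forall>\<phi> \<psi>. T (\<lambda>x. \<phi> x + \<psi> x) = (\<lambda>x. T \<phi> x + T \<psi> x))
                \<and> (\<forall>c \<phi>. T (\<lambda>x. c * \<phi> x) = (\<lambda>x. c * T \<phi> x))"

text \<open>(Not necessarily unital) R-algebra homomorphism L_R(G) -> Hom_R(M), where the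
product in Hom_R(M) is composition.\<close>

definition LPA_hom :: "'v set \<Rightarrow> 'e set \<Rightarrow> ('e \<Rightarrow> 'v) \<Rightarrow> ('e \<Rightarrow> 'v set)
    \<Rightarrow> ((('v, 'e) ugen list \<Rightarrow> 'r::comm_ring_1) set \<Rightarrow> ('x \<Rightarrow> 'r) \<Rightarrow> ('x \<Rightarrow> 'r)) \<Rightarrow> bool" where
  "LPA_hom V E s r \<pi> \<longleftrightarrow>
     (\<forall>X\<in>LPA V E s r. is_endo (\<pi> X))
   \<and> (\<forall>X\<in>LPA V E s r. \<forall>Y\<in>LPA V E s r.
        \<pi> (LPA_add V E s r X Y) = (\<lambda>\<phi> x. \<pi> X \<phi> x + \<pi> Y \<phi> x))
   \<and> (\<forall>X\<in>LPA V E s r. \<forall>Y\<in>LPA V E s r.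
        \<pi> (LPA_mult V E s r X Y) = \<pi> X \<circ> \<pi> Y)
   \<and> (\<forall>c. \<forall>X\<in>LPA V E s r. \<pi> (LPA_smult V E s r c X) = (\<lambda>\<phi> x. c * \<pi> X \<phi> x))"

definition branching_rep_on_gens :: "'v set \<Rightarrow> 'e set \<Rightarrow> ('e \<Rightarrow> 'v) \<Rightarrow> ('e \<Rightarrow> 'v set)
    \<Rightarrow> ('e \<Rightarrow> 'x set) \<Rightarrow> ('v set \<Rightarrow> 'x set) \<Rightarrow> ('e \<Rightarrow> 'x \<Rightarrow> 'x)
    \<Rightarrow> ((('v, 'e) ugen list \<Rightarrow> 'r::comm_ring_1) set \<Rightarrow> ('x \<Rightarrow> 'r) \<Rightarrow> ('x \<Rightarrow> 'r)) \<Rightarrow> bool" where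
  "branching_rep_on_gens V E s r RR D f \<pi> \<longleftrightarrow>
     (\<forall>e\<in>E. \<forall>\<phi>. \<pi> (LPA_s V E s r e) \<phi> =
        (\<lambda>x. if x \<in> RR e then \<phi> (inv_into (D (r e)) (f e) x) else 0))
   \<and> (\<forall>e\<in>E. \<forall>\<phi>. \<pi> (LPA_sstar V E s r e) \<phi> =
        (\<lambda>x. if x \<in> D (r e) then \<phi> (f e x) else 0))
   \<and> (\<forall>A\<in>gzero V E r. \<forall>\<phi>. \<pi> (LPA_p V E s r A) \<phi> =
        (\<lambda>x. if x \<in> D A then \<phi> x else 0))"

end

theory Submission
  imports Defs
begin


definition fs :: "('g list \<Rightarrow> 'r::comm_ring_1) \<Rightarrow> bool" where
  "fs a \<longleftrightarrow> finite {w. a w \<noteq> 0}"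

lemma endo_zero: "is_endo T \<Longrightarrow> T (\<lambda>x. 0) = (\<lambda>x. 0)"
proof -
  assume "is_endo T"
  then have "\<forall>c \<phi>. T (\<lambda>x. c * \<phi> x) = (\<lambda>x. c * T \<phi> x)" unfolding is_endo_def by blast
  from spec[OF spec[OF this, of 0], of "\<lambda>x. 0"] show ?thesis by simp
qed

lemma endo_add: "is_endo T \<Longrightarrow> T (\<lambda>x. \<phi> x + \<psi> x) x = T \<phi> x + T \<psi> x"
  unfolding is_endo_def by metis

lemma endo_smult: "is_endo T \<Longrightarrow> T (\<lambda>x. c * \<phi> x) x = c * T \<phi> x"
  unfolding is_endo_def by metis

lemma endo_sum: assumes T: "is_endo T" and B: "finite B" shows "T (\<lambda>y. \<Sum>v\<in>B. F v y) x = (\<Sum>v\<in>B. T (F v) x)"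
  using B
proof (induction B arbitrary: x rule: finite_induct)
  case empty then show ?case using endo_zero[OF T] by simp
next
  case (insert v B)
  have "T (\<lambda>y. \<Sum>v\<in>insert v B. F v y) = T (\<lambda>y. F v y + (\<Sum>v\<in>B. F v y))"
    using insert by simp
  then show ?case using insert endo_add[OF T, of "F v" "\<lambda>y. \<Sum>v\<in>B. F v y" x] by simp
qed

lemma endo_comp: "is_endo S \<Longrightarrow> is_endo T \<Longrightarrow> is_endo (S \<circ> T)"
  unfolding is_endo_def by simp

context
  fixes r :: "'e \<Rightarrow> 'v set" and RR :: "'e \<Rightarrow> 'x set" and D :: "'v set \<Rightarrow> 'x set"
    and f :: "'e \<Rightarrow> 'x \<Rightarrow> 'x"
begin

definition gop :: "('v,'e) ugen \<Rightarrow> ('x \<Rightarrow> 'r::comm_ring_1) \<Rightarrow> 'x \<Rightarrow> 'r" where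
  "gop g \<phi> = (case g of
      GS e \<Rightarrow> (\<lambda>x. if x \<in> RR e then \<phi> (inv_into (D (r e)) (f e) x) else 0)
    | GSstar e \<Rightarrow> (\<lambda>x. if x \<in> D (r e) then \<phi> (f e x) else 0)
    | GP A \<Rightarrow> (\<lambda>x. if x \<in> D A then \<phi> x else 0))"

fun opw :: "('v,'e) ugen list \<Rightarrow> ('x \<Rightarrow> 'r::comm_ring_1) \<Rightarrow> 'x \<Rightarrow> 'r" where
  "opw [] = (\<lambda>\<phi> x. 0)"
| "opw [g] = gop g"
| "opw (g # h # w) = gop g \<circ> opw (h # w)"

lemma gop_endo: "is_endo (gop g)"
  unfolding is_endo_def gop_def by (cases g) (auto simp: fun_eq_iff ring_distribs)

lemma opw_endo: "is_endo (opw w)"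
proof (induction w rule: opw.induct)
  case 1 then show ?case by (simp add: is_endo_def)
next
  case (2 g) then show ?case by (simp add: gop_endo)
next
  case (3 g h w) then show ?case using endo_comp[OF gop_endo[of g] 3] by (simp only: opw.simps)
qed

lemma opw_append: "u \<noteq> [] \<Longrightarrow> v \<noteq> [] \<Longrightarrow> opw (u @ v) = opw u \<circ> opw v"
proof (induction u)
  case Nil then show ?case by simp
next
  case (Cons g u)
  show ?case
  proof (cases u)
    case Nil then show ?thesis using Cons by (cases v) auto
  next
    case (Cons h u') then show ?thesis using Cons.IH Cons.prems by (cases v) (auto simp: comp_assoc)
  qed
qed

definition pit :: "(('v,'e) ugen list \<Rightarrow> 'r::comm_ring_1) \<Rightarrow> ('x \<Rightarrow> 'r) \<Rightarrow> 'x \<Rightarrow> 'r" where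
  "pit a \<phi> = (\<lambda>x. \<Sum>w\<in>{w. a w \<noteq> 0}. a w * opw w \<phi> x)"

lemma pit_sup: "finite W \<Longrightarrow> {w. a w \<noteq> 0} \<subseteq> W \<Longrightarrow> pit a \<phi> x = (\<Sum>w\<in>W. a w * opw w \<phi> x)"
  unfolding pit_def by (rule sum.mono_neutral_left) auto

lemma pit_endo: "is_endo (pit a)"
proof -
  have 1: "opw w (\<lambda>x. \<phi> x + \<psi> x) x = opw w \<phi> x + opw w \<psi> x" for w \<phi> \<psi> x
    using endo_add[OF opw_endo] by blast
  have 2: "opw w (\<lambda>x. c * \<phi> x) x = c * opw w \<phi> x" for w c \<phi> x
    using endo_smult[OF opw_endo] by blast
  show ?thesis unfolding is_endo_def pit_def
    by (auto simp: fun_eq_iff 1 2 sum.distrib ring_distribs sum_distrib_left mult.left_commute)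
qed

lemma pit_add: "fs a \<Longrightarrow> fs b \<Longrightarrow> pit (fa_add a b) \<phi> x = pit a \<phi> x + pit b \<phi> x"
proof -
  assume a: "fs a" and b: "fs b"
  let ?W = "{w. a w \<noteq> 0} \<union> {w. b w \<noteq> 0}"
  have fW: "finite ?W" using a b by (simp add: fs_def)
  have "pit (fa_add a b) \<phi> x = (\<Sum>w\<in>?W. fa_add a b w * opw w \<phi> x)"
    by (rule pit_sup[OF fW]) (auto simp: fa_add_def)
  also have "\<dots> = (\<Sum>w\<in>?W. a w * opw w \<phi> x) + (\<Sum>w\<in>?W. b w * opw w \<phi> x)"
    by (simp add: fa_add_def ring_distribs sum.distrib)
  also have "\<dots> = pit a \<phi> x + pit b \<phi> x"
    using pit_sup[OF fW, of a] pit_sup[OF fW, of b] by auto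
  finally show ?thesis .
qed

lemma pit_sub: "fs a \<Longrightarrow> fs b \<Longrightarrow> pit (fa_sub a b) \<phi> x = pit a \<phi> x - pit b \<phi> x"
proof -
  assume a: "fs a" and b: "fs b"
  let ?W = "{w. a w \<noteq> 0} \<union> {w. b w \<noteq> 0}"
  have fW: "finite ?W" using a b by (simp add: fs_def)
  have "pit (fa_sub a b) \<phi> x = (\<Sum>w\<in>?W. fa_sub a b w * opw w \<phi> x)"
    by (rule pit_sup[OF fW]) (auto simp: fa_sub_def)
  also have "\<dots> = (\<Sum>w\<in>?W. a w * opw w \<phi> x) - (\<Sum>w\<in>?W. b w * opw w \<phi> x)"
    by (simp add: fa_sub_def ring_distribs sum_subtractf)
  also have "\<dots> = pit a \<phi> x - pit b \<phi> x"
    using pit_sup[OF fW, of a] pit_sup[OF fW, of b] by auto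
  finally show ?thesis .
qed

lemma pit_smult: "fs a \<Longrightarrow> pit (fa_smult c a) \<phi> x = c * pit a \<phi> x"
proof -
  assume a: "fs a"
  let ?W = "{w. a w \<noteq> 0}"
  have fW: "finite ?W" using a by (simp add: fs_def)
  have "pit (fa_smult c a) \<phi> x = (\<Sum>w\<in>?W. fa_smult c a w * opw w \<phi> x)"
    by (rule pit_sup[OF fW]) (auto simp: fa_smult_def)
  also have "\<dots> = c * pit a \<phi> x"
    using pit_sup[OF fW, of a] by (simp add: fa_smult_def sum_distrib_left mult.assoc)
  finally show ?thesis .
qed

lemma pit_gen: "pit (fa_gen g) = gop g"
proof -
  have "pit (fa_gen g) \<phi> x = gop g \<phi> x" for \<phi> x
    using pit_sup[of "{[g]}" "fa_gen g" \<phi> x] by (auto simp: fa_gen_def)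
  then show ?thesis by (auto simp: fun_eq_iff)
qed

lemma pit_zero: "pit fa_zero \<phi> x = 0"
  by (simp add: pit_def fa_zero_def)


lemma fa_mult_supp:
  assumes "fa_mult a b w \<noteq> 0"
  shows "\<exists>i. 1 \<le> i \<and> i < length w \<and> a (take i w) \<noteq> 0 \<and> b (drop i w) \<noteq> 0"
proof (rule ccontr)
  assume "\<not> ?thesis"
  then have "\<forall>i\<in>{1..<length w}. a (take i w) * b (drop i w) = 0" by auto
  then have "fa_mult a b w = 0" unfolding fa_mult_def by simp
  then show False using assms by simp
qed

lemma fs_mult_sub:
  "{w. fa_mult a b w \<noteq> 0} \<subseteq> (\<lambda>(u,v). u @ v) ` ({w. a w \<noteq> 0} \<times> {w. b w \<noteq> 0})"
proof
  fix w assume "w \<in> {w. fa_mult a b w \<noteq> 0}"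
  then obtain i where "a (take i w) \<noteq> 0" "b (drop i w) \<noteq> 0" using fa_mult_supp by blast
  then show "w \<in> (\<lambda>(u,v). u @ v) ` ({w. a w \<noteq> 0} \<times> {w. b w \<noteq> 0})"
    by (intro image_eqI[of _ _ "(take i w, drop i w)"]) auto
qed

lemma fs_mult: "fs a \<Longrightarrow> fs b \<Longrightarrow> fs (fa_mult a b)"
  unfolding fs_def using fs_mult_sub by (metis finite_SigmaI finite_imageI finite_subset)

lemma pit_mult:
  assumes a: "fs a" and b: "fs b"
  shows "pit (fa_mult a b) = pit a \<circ> pit b"
proof (intro ext)
  fix \<phi> x
  define A where "A = {w. a w \<noteq> 0}"
  define B where "B = {w. b w \<noteq> 0}"
  define C where "C = (\<lambda>(u,v). u @ v) ` (A \<times> B)"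
  have fA: "finite A" and fB: "finite B" using a b by (auto simp: fs_def A_def B_def)
  have fC: "finite C" using fA fB by (simp add: C_def)
  define Sig where "Sig = Sigma C (\<lambda>w. {1..<length w})"
  have fSig: "finite Sig" using fC by (simp add: Sig_def)
  define h where "h = (\<lambda>(w::('v,'e) ugen list, i::nat). (take i w, drop i w))"
  define G where "G = (\<lambda>(u,v). a u * b v * opw (u @ v) \<phi> x)"
  define H where "H = (\<lambda>(u,v). a u * b v * opw u (opw v \<phi>) x)"
  have injh: "inj_on h Sig"
  proof (rule inj_onI)
    fix p q assume "p \<in> Sig" "q \<in> Sig" "h p = h q"
    then show "p = q" unfolding Sig_def h_def
      by (cases p, cases q) (auto, metis append_take_drop_id, metis length_take min.absorb4 append_take_drop_id)
  qed
  have "pit (fa_mult a b) \<phi> x = (\<Sum>w\<in>C. fa_mult a b w * opw w \<phi> x)"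
    by (rule pit_sup[OF fC]) (use fs_mult_sub in \<open>auto simp: C_def A_def B_def\<close>)
  also have "\<dots> = (\<Sum>w\<in>C. \<Sum>i\<in>{1..<length w}. a (take i w) * b (drop i w) * opw w \<phi> x)"
    by (simp add: fa_mult_def sum_distrib_right)
  also have "\<dots> = (\<Sum>p\<in>Sig. G (h p))"
    unfolding Sig_def using fC
    by (subst sum.Sigma) (auto simp: G_def h_def intro!: sum.cong)
  also have "\<dots> = (\<Sum>p\<in>h ` Sig. G p)"
    by (rule sum.reindex[OF injh, symmetric, unfolded comp_def])
  also have "\<dots> = (\<Sum>p\<in>h ` Sig \<inter> (A \<times> B). G p)"
    by (rule sum.mono_neutral_right) (use fSig in \<open>auto simp: G_def A_def B_def\<close>)
  also have "\<dots> = (\<Sum>p\<in>h ` Sig \<inter> (A \<times> B). H p)"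
  proof (rule sum.cong[OF refl])
    fix p assume "p \<in> h ` Sig \<inter> (A \<times> B)"
    then obtain w i where "p = (take i w, drop i w)" "1 \<le> i" "i < length w"
      by (auto simp: h_def Sig_def)
    moreover have "take i w \<noteq> []" "drop i w \<noteq> []" using \<open>1 \<le> i\<close> \<open>i < length w\<close> by auto
    then have "opw w \<phi> x = opw (take i w) (opw (drop i w) \<phi>) x"
      using opw_append[of "take i w" "drop i w"] by (metis append_take_drop_id comp_apply)
    then show "G p = H p" using \<open>p = _\<close> by (simp add: G_def H_def)
  qed
  also have "\<dots> = (\<Sum>p\<in>A \<times> B. H p)"
  proof (rule sum.mono_neutral_left)
    show "finite (A \<times> B)" using fA fB by simp
    show "h ` Sig \<inter> (A \<times> B) \<subseteq> A \<times> B" by blast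
    show "\<forall>p\<in>(A \<times> B) - (h ` Sig \<inter> (A \<times> B)). H p = 0"
    proof
      fix p assume p: "p \<in> (A \<times> B) - (h ` Sig \<inter> (A \<times> B))"
      obtain u v where uv: "p = (u, v)" by (cases p)
      have "u = [] \<or> v = []"
      proof (rule ccontr)
        assume "\<not> (u = [] \<or> v = [])"
        then have "h (u @ v, length u) = p" "(u @ v, length u) \<in> Sig"
          using p uv by (auto simp: h_def Sig_def C_def Suc_le_eq)
        then have "p \<in> h ` Sig" by (metis image_eqI)
        moreover have "p \<notin> h ` Sig" using p by (metis Diff_iff IntI)
        ultimately show False by contradiction
      qed
      have "opw u (opw v \<phi>) x = 0"
      proof (cases "u = []")
        case True then show ?thesis by simp
      next
        case False
        then have "v = []" using \<open>u = [] \<or> v = []\<close> by simp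
        then have "opw v \<phi> = (\<lambda>x. 0)" by simp
        then show ?thesis using endo_zero[OF opw_endo[of u]] by metis
      qed
      then show "H p = 0" using uv by (simp add: H_def)
    qed
  qed
  also have "\<dots> = (\<Sum>u\<in>A. \<Sum>v\<in>B. a u * (b v * opw u (opw v \<phi>) x))"
    by (simp add: H_def sum.cartesian_product mult.assoc)
  also have "\<dots> = (\<Sum>u\<in>A. a u * opw u (\<lambda>y. \<Sum>v\<in>B. b v * opw v \<phi> y) x)"
  proof (rule sum.cong[OF refl])
    fix u
    have "opw u (\<lambda>y. \<Sum>v\<in>B. b v * opw v \<phi> y) x = (\<Sum>v\<in>B. opw u (\<lambda>y. b v * opw v \<phi> y) x)"
      by (rule endo_sum[OF opw_endo fB])
    also have "\<dots> = (\<Sum>v\<in>B. b v * opw u (opw v \<phi>) x)"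
      by (simp add: endo_smult[OF opw_endo])
    finally show "(\<Sum>v\<in>B. a u * (b v * opw u (opw v \<phi>) x)) = a u * opw u (\<lambda>y. \<Sum>v\<in>B. b v * opw v \<phi> y) x"
      by (simp add: sum_distrib_left)
  qed
  also have "\<dots> = (pit a \<circ> pit b) \<phi> x"
    by (simp add: pit_def A_def B_def)
  finally show "pit (fa_mult a b) \<phi> x = (pit a \<circ> pit b) \<phi> x" .
qed

end



lemma free_fs: "a \<in> lp_free V E r \<Longrightarrow> fs a"
  by (simp add: lp_free_def fs_def)

lemma free_by:
  assumes h: "\<And>w. c w \<noteq> 0 \<Longrightarrow> a w \<noteq> 0 \<or> b w \<noteq> 0"
    and a: "a \<in> lp_free V E r" and b: "b \<in> lp_free V E r"
  shows "c \<in> lp_free V E r"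
proof -
  have "{w. c w \<noteq> 0} \<subseteq> {w. a w \<noteq> 0} \<union> {w. b w \<noteq> 0}" using h by auto
  then have "finite {w. c w \<noteq> 0}" using a b by (auto simp: lp_free_def intro: finite_subset)
  moreover have "c [] = 0" using h[of "[]"] a b by (auto simp: lp_free_def)
  moreover have "\<forall>g\<in>set w. valid_gen V E r g" if "c w \<noteq> 0" for w
    using h[OF that] a b by (auto simp: lp_free_def)
  ultimately show ?thesis by (simp add: lp_free_def)
qed

lemma free_add: "a \<in> lp_free V E r \<Longrightarrow> b \<in> lp_free V E r \<Longrightarrow> fa_add a b \<in> lp_free V E r"
  by (rule free_by[of _ a b]) (auto simp: fa_add_def)

lemma free_sub: "a \<in> lp_free V E r \<Longrightarrow> b \<in> lp_free V E r \<Longrightarrow> fa_sub a b \<in> lp_free V E r"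
  by (rule free_by[of _ a b]) (auto simp: fa_sub_def)

lemma free_smult: "a \<in> lp_free V E r \<Longrightarrow> fa_smult c a \<in> lp_free V E r"
  by (rule free_by[of _ a a]) (auto simp: fa_smult_def)

lemma free_zero: "fa_zero \<in> lp_free V E r"
  by (simp add: lp_free_def fa_zero_def)

lemma free_gen: "valid_gen V E r g \<Longrightarrow> fa_gen g \<in> lp_free V E r"
  unfolding lp_free_def fa_gen_def by auto

lemma free_mult: "a \<in> lp_free V E r \<Longrightarrow> b \<in> lp_free V E r \<Longrightarrow> fa_mult a b \<in> lp_free V E r"
proof -
  assume a: "a \<in> lp_free V E r" and b: "b \<in> lp_free V E r"
  have "fs (fa_mult a b)" using fs_mult free_fs a b by blast
  moreover have "fa_mult a b [] = 0" by (simp add: fa_mult_def)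
  moreover have "\<forall>g\<in>set w. valid_gen V E r g" if "fa_mult a b w \<noteq> 0" for w
  proof -
    note nz = that
    obtain i where "a (take i w) \<noteq> 0" "b (drop i w) \<noteq> 0" using fa_mult_supp[OF nz] by blast
    then have "\<forall>g\<in>set (take i w). valid_gen V E r g" "\<forall>g\<in>set (drop i w). valid_gen V E r g"
      using a b by (auto simp: lp_free_def)
    then show ?thesis by (metis Un_iff append_take_drop_id set_append)
  qed
  ultimately show ?thesis by (simp add: lp_free_def fs_def)
qed

lemma free_sum: "finite S \<Longrightarrow> (\<And>e. e \<in> S \<Longrightarrow> g e \<in> lp_free V E r) \<Longrightarrow> (\<lambda>w. \<Sum>e\<in>S. g e w) \<in> lp_free V E r"
proof (induction S rule: finite_induct)
  case empty then show ?case using free_zero by (simp add: fa_zero_def)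
next
  case (insert e S)
  have "(\<lambda>w. \<Sum>e\<in>insert e S. g e w) = fa_add (g e) (\<lambda>w. \<Sum>e\<in>S. g e w)"
    using insert by (simp add: fa_add_def)
  then show ?case using insert by (simp only:) (rule free_add; auto)
qed

lemma pit_sum: "finite S \<Longrightarrow> (\<And>e. e \<in> S \<Longrightarrow> g e \<in> lp_free V E r) \<Longrightarrow>
   pit r RR D f (\<lambda>w. \<Sum>e\<in>S. g e w) \<phi> x = (\<Sum>e\<in>S. pit r RR D f (g e) \<phi> x)"
proof (induction S rule: finite_induct)
  case empty then show ?case using pit_zero by (simp add: fa_zero_def)
next
  case (insert e S)
  have "(\<lambda>w. \<Sum>e\<in>insert e S. g e w) = fa_add (g e) (\<lambda>w. \<Sum>e\<in>S. g e w)"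
    using insert by (simp add: fa_add_def)
  moreover have "fs (g e)" by (rule free_fs[of _ V E r]) (use insert in auto)
  moreover have "fs (\<lambda>w. \<Sum>e\<in>S. g e w)" by (rule free_fs[of _ V E r], rule free_sum) (use insert in auto)
  ultimately show ?case using insert pit_add[of "g e" "\<lambda>w. \<Sum>e\<in>S. g e w" r RR D f \<phi> x] by simp
qed

lemma rels_free:
  assumes ug: "ultragraph V E s r"
  shows "lp_rels V E s r \<subseteq> lp_free V E r"
proof -
  have gv: "{s e} \<in> gzero V E r" if "e \<in> E" for e using ug that by (auto simp: ultragraph_def intro: gz_vertex)
  note G = free_gen[unfolded valid_gen_def]
  have sV: "s e \<in> V" if "e \<in> E" for e using ug that by (auto simp: ultragraph_def)
  show ?thesis
    unfolding lp_rels_def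
    apply (intro Un_least)
    apply (auto intro!: G free_sub free_add free_mult free_zero free_sum gz_empty gz_inter gz_union gz_range gv gz_vertex sV)
    done
qed

lemma ideal_free: assumes ug: "ultragraph V E s r" and a: "a \<in> lp_ideal V E s r" shows "a \<in> lp_free V E r"
  using a by (induction a rule: lp_ideal.induct) (use rels_free[OF ug] in \<open>auto intro: free_zero free_add free_smult free_mult\<close>)



lemma fs_gen: "fs (fa_gen g)"
proof -
  have "{w. fa_gen g w \<noteq> 0} \<subseteq> {[g]}" by (auto simp: fa_gen_def)
  then show ?thesis unfolding fs_def using finite_subset by blast
qed

lemma fs_zero: "fs fa_zero"
  by (simp add: fs_def fa_zero_def)

lemma fs_add: "fs a \<Longrightarrow> fs b \<Longrightarrow> fs (fa_add a b)"
  unfolding fs_def fa_add_def by (rule finite_subset[of _ "{w. a w \<noteq> 0} \<union> {w. b w \<noteq> 0}"]) auto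

lemma fs_sub: "fs a \<Longrightarrow> fs b \<Longrightarrow> fs (fa_sub a b)"
  unfolding fs_def fa_sub_def by (rule finite_subset[of _ "{w. a w \<noteq> 0} \<union> {w. b w \<noteq> 0}"]) auto

lemma gop_simps:
  "gop r RR D f (GS e) \<phi> = (\<lambda>x. if x \<in> RR e then \<phi> (inv_into (D (r e)) (f e) x) else 0)"
  "gop r RR D f (GSstar e) \<phi> = (\<lambda>x. if x \<in> D (r e) then \<phi> (f e x) else 0)"
  "gop r RR D f (GP A) \<phi> = (\<lambda>x. if x \<in> D A then \<phi> x else 0)"
  by (simp_all add: gop_def)

lemma pit_rel:
  fixes a :: "('v,'e) ugen list \<Rightarrow> 'r::comm_ring_1"
  assumes ug: "ultragraph V E s r" and bs: "branching_system V E s r RR D f"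
    and a: "a \<in> lp_rels V E s r"
  shows "pit r RR D f a \<phi> x = 0"
proof -
  have b_empty: "D {} = {}" using bs by (simp add: branching_system_def)
  have b_int: "D A \<inter> D B = D (A \<inter> B)" if "A \<in> gzero V E r" "B \<in> gzero V E r" for A B
    using bs that by (simp add: branching_system_def)
  have b_un: "D A \<union> D B = D (A \<union> B)" if "A \<in> gzero V E r" "B \<in> gzero V E r" for A B
    using bs that by (simp add: branching_system_def)
  have b_sub: "RR e \<subseteq> D {s e}" if "e \<in> E" for e
    using bs that by (simp add: branching_system_def)
  have b_disj: "RR e \<inter> RR e' = {}" if "e \<in> E" "e' \<in> E" "e \<noteq> e'" for e e'
    using bs that by (simp add: branching_system_def)
  have b_cov: "D {v} = (\<Union>e\<in>{e\<in>E. s e = v}. RR e)"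
    if "v \<in> V" "finite {e\<in>E. s e = v}" "{e\<in>E. s e = v} \<noteq> {}" for v
    using bs that by (simp add: branching_system_def)
  have b_bij: "bij_betw (f e) (D (r e)) (RR e)" if "e \<in> E" for e
    using bs that by (simp add: branching_system_def)
  have inv1: "inv_into (D (r e)) (f e) y \<in> D (r e)" "f e (inv_into (D (r e)) (f e) y) = y"
    if "e \<in> E" "y \<in> RR e" for e y
    using b_bij[OF that(1)] that(2)
    by (auto simp: bij_betw_def intro: inv_into_into f_inv_into_f)
  have inv2: "f e y \<in> RR e" "inv_into (D (r e)) (f e) (f e y) = y"
    if "e \<in> E" "y \<in> D (r e)" for e y
    using b_bij[OF that(1)] that(2)
    by (auto simp: bij_betw_def intro: inv_into_f_f)
  have sV: "s e \<in> V" if "e \<in> E" for e using ug that by (auto simp: ultragraph_def)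
  note S = pit_sub pit_add pit_gen pit_mult fs_gen fs_mult fs_add fs_sub gop_simps
  from a show ?thesis
    unfolding lp_rels_def
  proof (elim UnE)
    assume "a \<in> {fa_gen (GP {})}"
    then show ?thesis by (simp add: S b_empty)
  next
    assume "a \<in> {fa_sub (fa_mult (fa_gen (GP A)) (fa_gen (GP B))) (fa_gen (GP (A \<inter> B))) | A B.
        A \<in> gzero V E r \<and> B \<in> gzero V E r}"
    then obtain A B where "A \<in> gzero V E r" "B \<in> gzero V E r"
      "a = fa_sub (fa_mult (fa_gen (GP A)) (fa_gen (GP B))) (fa_gen (GP (A \<inter> B)))" by blast
    then show ?thesis using b_int[of A B] by (auto simp: S)
  next
    assume "a \<in> {fa_sub (fa_gen (GP (A \<union> B)))
        (fa_sub (fa_add (fa_gen (GP A)) (fa_gen (GP B))) (fa_gen (GP (A \<inter> B)))) | A B.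
        A \<in> gzero V E r \<and> B \<in> gzero V E r}"
    then obtain A B where "A \<in> gzero V E r" "B \<in> gzero V E r"
      "a = fa_sub (fa_gen (GP (A \<union> B)))
        (fa_sub (fa_add (fa_gen (GP A)) (fa_gen (GP B))) (fa_gen (GP (A \<inter> B))))" by blast
    then show ?thesis using b_int[of A B] b_un[of A B] by (auto simp: S)
  next
    assume "a \<in> {fa_sub (fa_mult (fa_gen (GP {s e})) (fa_gen (GS e))) (fa_gen (GS e)) | e. e \<in> E}"
    then obtain e where "e \<in> E" "a = fa_sub (fa_mult (fa_gen (GP {s e})) (fa_gen (GS e))) (fa_gen (GS e))"
      by blast
    then show ?thesis using b_sub[of e] by (auto simp: S)
  next
    assume "a \<in> {fa_sub (fa_mult (fa_gen (GS e)) (fa_gen (GP (r e)))) (fa_gen (GS e)) | e. e \<in> E}"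
    then obtain e where "e \<in> E" "a = fa_sub (fa_mult (fa_gen (GS e)) (fa_gen (GP (r e)))) (fa_gen (GS e))"
      by blast
    then show ?thesis using inv1[of e x] by (auto simp: S)
  next
    assume "a \<in> {fa_sub (fa_mult (fa_gen (GP (r e))) (fa_gen (GSstar e))) (fa_gen (GSstar e)) | e. e \<in> E}"
    then obtain e where "e \<in> E" "a = fa_sub (fa_mult (fa_gen (GP (r e))) (fa_gen (GSstar e))) (fa_gen (GSstar e))"
      by blast
    then show ?thesis by (auto simp: S)
  next
    assume "a \<in> {fa_sub (fa_mult (fa_gen (GSstar e)) (fa_gen (GP {s e}))) (fa_gen (GSstar e)) | e. e \<in> E}"
    then obtain e where "e \<in> E" "a = fa_sub (fa_mult (fa_gen (GSstar e)) (fa_gen (GP {s e}))) (fa_gen (GSstar e))"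
      by blast
    then show ?thesis using inv2[of e x] b_sub[of e] by (auto simp: S)
  next
    assume "a \<in> {fa_sub (fa_mult (fa_gen (GSstar e)) (fa_gen (GS f')))
        (if e = f' then fa_gen (GP (r e)) else fa_zero) | e f'. e \<in> E \<and> f' \<in> E}"
    then obtain e f' where ef: "e \<in> E" "f' \<in> E" "a = fa_sub (fa_mult (fa_gen (GSstar e)) (fa_gen (GS f')))
        (if e = f' then fa_gen (GP (r e)) else fa_zero)"
      by blast
    show ?thesis
    proof (cases "e = f'")
      case True then show ?thesis using ef inv2[of e x] by (auto simp: S)
    next
      case False
      show ?thesis using False ef inv2[of e x] b_disj[of e f'] by (auto simp: S pit_zero fs_zero)
    qed
  next
    assume "a \<in> {fa_sub (fa_gen (GP {v}))
        (\<lambda>w. \<Sum>e\<in>{e\<in>E. s e = v}. fa_mult (fa_gen (GS e)) (fa_gen (GSstar e)) w) | v.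
        v \<in> V \<and> finite {e\<in>E. s e = v} \<and> {e\<in>E. s e = v} \<noteq> {}}"
    then obtain v where v: "v \<in> V" "finite {e\<in>E. s e = v}" "{e\<in>E. s e = v} \<noteq> {}"
      "a = fa_sub (fa_gen (GP {v}))
        (\<lambda>w. \<Sum>e\<in>{e\<in>E. s e = v}. fa_mult (fa_gen (GS e)) (fa_gen (GSstar e)) w)"
      by blast
    let ?S = "{e\<in>E. s e = v}"
    have free_each: "(fa_mult (fa_gen (GS e)) (fa_gen (GSstar e)) :: _ \<Rightarrow> 'r) \<in> lp_free V E r" if "e \<in> ?S" for e
      using that by (auto intro!: free_mult free_gen simp: valid_gen_def)
    have "(\<lambda>w::('v,'e) ugen list. \<Sum>e\<in>?S. fa_mult (fa_gen (GS e)) (fa_gen (GSstar e)) w :: 'r) \<in> lp_free V E r"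
      by (rule free_sum[OF v(2) free_each])
    then have fsum: "fs (\<lambda>w::('v,'e) ugen list. \<Sum>e\<in>?S. fa_mult (fa_gen (GS e)) (fa_gen (GSstar e)) w :: 'r)"
      by (rule free_fs)
    have each: "pit r RR D f (fa_mult (fa_gen (GS e)) (fa_gen (GSstar e))) \<phi> x
        = (if x \<in> RR e then \<phi> x else 0)" if "e \<in> ?S" for e
      using that inv1[of e x] by (auto simp: S)
    have sumv: "(\<Sum>e\<in>?S. pit r RR D f (fa_mult (fa_gen (GS e)) (fa_gen (GSstar e))) \<phi> x)
        = (if x \<in> D {v} then \<phi> x else 0)"
    proof (cases "x \<in> D {v}")
      case True
      then obtain e0 where e0: "e0 \<in> ?S" "x \<in> RR e0" using b_cov[OF v(1-3)] by auto
      have "(\<Sum>e\<in>?S. pit r RR D f (fa_mult (fa_gen (GS e)) (fa_gen (GSstar e))) \<phi> x)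
          = (\<Sum>e\<in>?S. if e = e0 then \<phi> x else 0)"
      proof (rule sum.cong[OF refl])
        fix e assume e: "e \<in> ?S"
        show "pit r RR D f (fa_mult (fa_gen (GS e)) (fa_gen (GSstar e))) \<phi> x = (if e = e0 then \<phi> x else 0)"
          using each[OF e] e0 e b_disj[of e e0] by auto
      qed
      also have "\<dots> = \<phi> x" using e0 v(2) by (simp add: sum.delta')
      finally show ?thesis using True by simp
    next
      case False
      then have "\<forall>e\<in>?S. x \<notin> RR e" using b_cov[OF v(1-3)] by auto
      then show ?thesis using False each by simp
    qed
    have psum: "pit r RR D f (\<lambda>w::('v,'e) ugen list. \<Sum>e\<in>?S. fa_mult (fa_gen (GS e)) (fa_gen (GSstar e)) w :: 'r) \<phi> x
      = (\<Sum>e\<in>?S. pit r RR D f (fa_mult (fa_gen (GS e)) (fa_gen (GSstar e))) \<phi> x)"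
      by (rule pit_sum[OF v(2) free_each])
    show ?thesis using v(4) fsum sumv psum
      by (simp add: pit_sub fs_gen pit_gen gop_simps)
  qed
qed

lemma pit_ideal:
  assumes ug: "ultragraph V E s r" and bs: "branching_system V E s r RR D f"
    and a: "a \<in> lp_ideal V E s r"
  shows "pit r RR D f a = (\<lambda>\<phi> x. 0)"
  using a
proof (induction a rule: lp_ideal.induct)
  case (li_rel a) then show ?case using pit_rel[OF ug bs] by (auto simp: fun_eq_iff)
next
  case li_zero then show ?case by (auto simp: fun_eq_iff pit_zero)
next
  case (li_add a b)
  have "fs a" "fs b" using free_fs ideal_free[OF ug li_add.hyps(1)] free_fs ideal_free[OF ug li_add.hyps(2)] by auto
  then show ?case using li_add by (auto simp: fun_eq_iff pit_add)
next
  case (li_smult a c)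
  have "fs a" using free_fs ideal_free[OF ug li_smult.hyps(1)] by auto
  then show ?case using li_smult by (auto simp: fun_eq_iff pit_smult)
next
  case (li_lmult b a)
  have "fs a" "fs b" using free_fs ideal_free[OF ug li_lmult.hyps(2)] free_fs[OF li_lmult.hyps(1)] by auto
  then show ?case using li_lmult endo_zero[OF pit_endo[of r RR D f b]] by (simp add: pit_mult)
next
  case (li_rmult b a)
  have "fs a" "fs b" using free_fs ideal_free[OF ug li_rmult.hyps(2)] free_fs[OF li_rmult.hyps(1)] by auto
  then show ?case using li_rmult by (simp add: pit_mult comp_def)
qed



definition PI where "PI r RR D f X = pit r RR D f (lp_rep X)"

definition wd :: "'g list \<Rightarrow> 'g list \<Rightarrow> 'r::comm_ring_1" where
  "wd w = (\<lambda>u. if u = w then 1 else 0)"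

lemma wd_cons:
  assumes "v \<noteq> []"
  shows "(wd (g # v) :: 'g list \<Rightarrow> 'r::comm_ring_1) = fa_mult (fa_gen g) (wd v)"
proof
  fix u :: "'g list"
  have t: "(fa_gen g (take i u) * wd v (drop i u) :: 'r) = (if i = 1 then (if u = g # v then 1 else 0) else 0)"
    if iin: "i \<in> {1..<length u}" for i
  proof (cases "i = 1")
    case True
    then obtain c u' where "u = c # u'" using iin by (cases u) auto
    then show ?thesis using True by (auto simp: fa_gen_def wd_def)
  next
    case False
    then have "length (take i u) \<noteq> 1" using iin by auto
    have "take i u \<noteq> [g]"
    proof
      assume "take i u = [g]"
      then have "length (take i u) = 1" by simp
      then show False using \<open>length (take i u) \<noteq> 1\<close> by simp
    qed
    then show ?thesis using False by (simp add: fa_gen_def)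
  qed
  have "fa_mult (fa_gen g) (wd v) u = (\<Sum>i\<in>{1..<length u}. (if i = 1 then (if u = g # v then 1 else 0) else 0 :: 'r))"
    unfolding fa_mult_def using t by (rule sum.cong[OF refl])
  also have "\<dots> = wd (g # v) u"
    using assms by (cases v) (auto simp: wd_def)
  finally show "(wd (g # v) u :: 'r) = fa_mult (fa_gen g) (wd v) u" by simp
qed

lemma wd_one: "wd [g] = fa_gen g"
  by (simp add: wd_def fa_gen_def fun_eq_iff)

lemma pit_wd: "pit r RR D f (wd w) = opw r RR D f w"
proof -
  have "pit r RR D f (wd w) \<phi> x = opw r RR D f w \<phi> x" for \<phi> x
    using pit_sup[of "{w}" "wd w" r RR D f \<phi> x] by (auto simp: wd_def)
  then show ?thesis by (auto simp: fun_eq_iff)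
qed

lemma free_wd: "w \<noteq> [] \<Longrightarrow> \<forall>g\<in>set w. valid_gen V E r g \<Longrightarrow> wd w \<in> lp_free V E r"
  by (auto simp: lp_free_def wd_def)

context
  fixes V :: "'v set" and E :: "'e set" and s :: "'e \<Rightarrow> 'v" and r :: "'e \<Rightarrow> 'v set"
    and RR :: "'e \<Rightarrow> 'x set" and D :: "'v set \<Rightarrow> 'x set" and f :: "'e \<Rightarrow> 'x \<Rightarrow> 'x"
  assumes ug: "ultragraph V E s r"
    and bs: "branching_system V E s r RR D f"
begin

lemma ideal_neg: "a \<in> lp_ideal V E s r \<Longrightarrow> fa_smult (-1) a \<in> lp_ideal V E s r"
  by (rule li_smult)

lemma class_mem: "b \<in> lp_class V E s r a \<longleftrightarrow> b \<in> lp_free V E r \<and> fa_sub a b \<in> lp_ideal V E s r"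
  by (simp add: lp_class_def)

lemma self_class: "a \<in> lp_free V E r \<Longrightarrow> a \<in> lp_class V E s r a"
proof -
  have "fa_sub a a = fa_zero" by (simp add: fa_sub_def fa_zero_def fun_eq_iff)
  then show "a \<in> lp_free V E r \<Longrightarrow> a \<in> lp_class V E s r a" by (simp add: class_mem li_zero)
qed

lemma rep_class: assumes a: "a \<in> lp_free V E r" shows "lp_rep (lp_class V E s r a) \<in> lp_class V E s r a"
  unfolding lp_rep_def using self_class[OF a] by (rule someI[where P="\<lambda>b. b \<in> lp_class V E s r a"])

lemma class_eq:
  assumes a: "a \<in> lp_free V E r" and b: "b \<in> lp_free V E r" and ab: "fa_sub a b \<in> lp_ideal V E s r"
  shows "lp_class V E s r a = lp_class V E s r b"
proof (rule set_eqI)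
  fix c
  have e1: "fa_sub b c = fa_add (fa_smult (-1) (fa_sub a b)) (fa_sub a c)"
    by (simp add: fa_sub_def fa_add_def fa_smult_def fun_eq_iff)
  have e2: "fa_sub a c = fa_add (fa_sub a b) (fa_sub b c)"
    by (simp add: fa_sub_def fa_add_def fun_eq_iff)
  show "c \<in> lp_class V E s r a \<longleftrightarrow> c \<in> lp_class V E s r b"
    unfolding class_mem
  proof (intro iffI conjI; elim conjE)
    assume "fa_sub a c \<in> lp_ideal V E s r"
    then show "fa_sub b c \<in> lp_ideal V E s r" unfolding e1 using ab by (intro li_add li_smult)
  next
    assume "fa_sub b c \<in> lp_ideal V E s r"
    then show "fa_sub a c \<in> lp_ideal V E s r" unfolding e2 using ab by (intro li_add)
  qed
qed

lemma pit_cong: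
  assumes a: "a \<in> lp_free V E r" and b: "b \<in> lp_free V E r" and ab: "fa_sub a b \<in> lp_ideal V E s r"
  shows "pit r RR D f a = pit r RR D f b"
proof (intro ext)
  fix \<phi> x
  have "pit r RR D f (fa_sub a b) \<phi> x = 0" using pit_ideal[OF ug bs ab] by simp
  then have "pit r RR D f a \<phi> x - pit r RR D f b \<phi> x = 0"
    using pit_sub[OF free_fs[OF a] free_fs[OF b]] by metis
  then show "pit r RR D f a \<phi> x = pit r RR D f b \<phi> x" by simp
qed

lemma PI_class: "a \<in> lp_free V E r \<Longrightarrow> PI r RR D f (lp_class V E s r a) = pit r RR D f a"
proof -
  assume a: "a \<in> lp_free V E r"
  have "lp_rep (lp_class V E s r a) \<in> lp_free V E r" "fa_sub a (lp_rep (lp_class V E s r a)) \<in> lp_ideal V E s r"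
    using rep_class[OF a] unfolding class_mem by auto
  then show ?thesis unfolding PI_def using pit_cong[OF a] by simp
qed

lemma LPA_elem: "X \<in> LPA V E s r \<Longrightarrow> \<exists>a\<in>lp_free V E r. X = lp_class V E s r a"
  by (auto simp: LPA_def)

lemma class_LPA: "a \<in> lp_free V E r \<Longrightarrow> lp_class V E s r a \<in> LPA V E s r"
  by (auto simp: LPA_def)

lemma class_add:
  assumes a: "a \<in> lp_free V E r" and b: "b \<in> lp_free V E r"
  shows "LPA_add V E s r (lp_class V E s r a) (lp_class V E s r b) = lp_class V E s r (fa_add a b)"
proof -
  let ?a = "lp_rep (lp_class V E s r a)" and ?b = "lp_rep (lp_class V E s r b)"
  have a': "?a \<in> lp_free V E r" "fa_sub a ?a \<in> lp_ideal V E s r" using rep_class[OF a] class_mem by auto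
  have b': "?b \<in> lp_free V E r" "fa_sub b ?b \<in> lp_ideal V E s r" using rep_class[OF b] class_mem by auto
  have "fa_sub (fa_add a b) (fa_add ?a ?b) = fa_add (fa_sub a ?a) (fa_sub b ?b)"
    by (simp add: fa_sub_def fa_add_def fun_eq_iff)
  then have "fa_sub (fa_add a b) (fa_add ?a ?b) \<in> lp_ideal V E s r" using a' b' by (simp add: li_add)
  then show ?thesis unfolding LPA_add_def
    using class_eq[OF free_add[OF a b] free_add[OF a'(1) b'(1)]] by simp
qed

lemma class_smult:
  assumes a: "a \<in> lp_free V E r"
  shows "LPA_smult V E s r c (lp_class V E s r a) = lp_class V E s r (fa_smult c a)"
proof -
  let ?a = "lp_rep (lp_class V E s r a)"
  have a': "?a \<in> lp_free V E r" "fa_sub a ?a \<in> lp_ideal V E s r" using rep_class[OF a] class_mem by auto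
  have "fa_sub (fa_smult c a) (fa_smult c ?a) = fa_smult c (fa_sub a ?a)"
    by (simp add: fa_sub_def fa_smult_def fun_eq_iff algebra_simps)
  then have "fa_sub (fa_smult c a) (fa_smult c ?a) \<in> lp_ideal V E s r" using a' by (simp add: li_smult)
  then show ?thesis unfolding LPA_smult_def
    using class_eq[OF free_smult[OF a] free_smult[OF a'(1)]] by simp
qed

lemma class_mult:
  assumes a: "a \<in> lp_free V E r" and b: "b \<in> lp_free V E r"
  shows "LPA_mult V E s r (lp_class V E s r a) (lp_class V E s r b) = lp_class V E s r (fa_mult a b)"
proof -
  let ?a = "lp_rep (lp_class V E s r a)" and ?b = "lp_rep (lp_class V E s r b)"
  have a': "?a \<in> lp_free V E r" "fa_sub a ?a \<in> lp_ideal V E s r" using rep_class[OF a] class_mem by auto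
  have b': "?b \<in> lp_free V E r" "fa_sub b ?b \<in> lp_ideal V E s r" using rep_class[OF b] class_mem by auto
  have "fa_sub (fa_mult a b) (fa_mult ?a ?b) = fa_add (fa_mult (fa_sub a ?a) b) (fa_mult ?a (fa_sub b ?b))"
    by (simp add: fa_sub_def fa_add_def fa_mult_def fun_eq_iff left_diff_distrib right_diff_distrib sum.distrib sum_subtractf)
  then have "fa_sub (fa_mult a b) (fa_mult ?a ?b) \<in> lp_ideal V E s r"
    using a' b' a b by (simp add: li_add li_lmult li_rmult)
  then show ?thesis unfolding LPA_mult_def
    using class_eq[OF free_mult[OF a b] free_mult[OF a'(1) b'(1)]] by simp
qed

end



context
  fixes V :: "'v set" and E :: "'e set" and s :: "'e \<Rightarrow> 'v" and r :: "'e \<Rightarrow> 'v set"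
    and RR :: "'e \<Rightarrow> 'x set" and D :: "'v set \<Rightarrow> 'x set" and f :: "'e \<Rightarrow> 'x \<Rightarrow> 'x"
  assumes ug: "ultragraph V E s r"
    and bs: "branching_system V E s r RR D f"
begin

lemma exist_hom: "LPA_hom V E s r (PI r RR D f :: _ \<Rightarrow> ('x \<Rightarrow> 'r::comm_ring_1) \<Rightarrow> _)"
  unfolding LPA_hom_def
proof (intro conjI ballI allI)
  fix X :: "(('v,'e) ugen list \<Rightarrow> 'r) set"
  show "is_endo (PI r RR D f X)" unfolding PI_def by (rule pit_endo)
next
  fix X Y :: "(('v,'e) ugen list \<Rightarrow> 'r) set"
  assume X: "X \<in> LPA V E s r" and Y: "Y \<in> LPA V E s r"
  obtain a where a: "a \<in> lp_free V E r" "X = lp_class V E s r a" using LPA_elem[OF ug bs X] by blast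
  obtain b where b: "b \<in> lp_free V E r" "Y = lp_class V E s r b" using LPA_elem[OF ug bs Y] by blast
  show "PI r RR D f (LPA_add V E s r X Y) = (\<lambda>\<phi> x. PI r RR D f X \<phi> x + PI r RR D f Y \<phi> x)"
    by (simp add: a(2) b(2) class_add[OF ug bs a(1) b(1)] PI_class[OF ug bs a(1)] PI_class[OF ug bs b(1)]
       PI_class[OF ug bs free_add[OF a(1) b(1)]] pit_add[OF free_fs[OF a(1)] free_fs[OF b(1)]] fun_eq_iff)
  show "PI r RR D f (LPA_mult V E s r X Y) = PI r RR D f X \<circ> PI r RR D f Y"
    by (simp add: a(2) b(2) class_mult[OF ug bs a(1) b(1)] PI_class[OF ug bs a(1)] PI_class[OF ug bs b(1)]
       PI_class[OF ug bs free_mult[OF a(1) b(1)]] pit_mult[OF free_fs[OF a(1)] free_fs[OF b(1)]])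
next
  fix c :: 'r and X :: "(('v,'e) ugen list \<Rightarrow> 'r) set"
  assume X: "X \<in> LPA V E s r"
  obtain a where a: "a \<in> lp_free V E r" "X = lp_class V E s r a" using LPA_elem[OF ug bs X] by blast
  show "PI r RR D f (LPA_smult V E s r c X) = (\<lambda>\<phi> x. c * PI r RR D f X \<phi> x)"
    by (simp add: a(2) class_smult[OF ug bs a(1)] PI_class[OF ug bs a(1)]
       PI_class[OF ug bs free_smult[OF a(1)]] pit_smult[OF free_fs[OF a(1)]] fun_eq_iff)
qed

lemma exist_gens: "branching_rep_on_gens V E s r RR D f (PI r RR D f :: _ \<Rightarrow> ('x \<Rightarrow> 'r::comm_ring_1) \<Rightarrow> _)"
proof -
  have g: "PI r RR D f (lp_class V E s r (fa_gen g) :: (('v,'e) ugen list \<Rightarrow> 'r) set) = gop r RR D f g"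
    if "valid_gen V E r g" for g
    by (simp add: PI_class[OF ug bs free_gen[OF that]] pit_gen)
  show ?thesis unfolding branching_rep_on_gens_def LPA_s_def LPA_sstar_def LPA_p_def
    using g by (auto simp: valid_gen_def gop_simps)
qed

lemma uniq:
  fixes \<pi>' :: "(('v,'e) ugen list \<Rightarrow> 'r::comm_ring_1) set \<Rightarrow> ('x \<Rightarrow> 'r) \<Rightarrow> 'x \<Rightarrow> 'r"
  assumes hom: "LPA_hom V E s r \<pi>'" and gens: "branching_rep_on_gens V E s r RR D f \<pi>'"
  shows "\<forall>X\<in>LPA V E s r. \<pi>' X = PI r RR D f X"
proof -
  have h_add: "\<pi>' (LPA_add V E s r X Y) = (\<lambda>\<phi> x. \<pi>' X \<phi> x + \<pi>' Y \<phi> x)"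
    if "X \<in> LPA V E s r" "Y \<in> LPA V E s r" for X Y using hom that unfolding LPA_hom_def by blast
  have h_mult: "\<pi>' (LPA_mult V E s r X Y) = \<pi>' X \<circ> \<pi>' Y"
    if "X \<in> LPA V E s r" "Y \<in> LPA V E s r" for X Y using hom that unfolding LPA_hom_def by blast
  have h_smult: "\<pi>' (LPA_smult V E s r c X) = (\<lambda>\<phi> x. c * \<pi>' X \<phi> x)"
    if "X \<in> LPA V E s r" for c X using hom that unfolding LPA_hom_def by blast
  have gen: "\<pi>' (lp_class V E s r (fa_gen g)) = gop r RR D f g" if "valid_gen V E r g" for g
    using gens that unfolding branching_rep_on_gens_def LPA_s_def LPA_sstar_def LPA_p_def
    by (cases g) (auto simp: valid_gen_def gop_simps fun_eq_iff)
  have word: "\<pi>' (lp_class V E s r (wd w)) = opw r RR D f w"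
    if "w \<noteq> []" "\<forall>g\<in>set w. valid_gen V E r g" for w
    using that
  proof (induction w)
    case Nil then show ?case by simp
  next
    case (Cons g v)
    show ?case
    proof (cases "v = []")
      case True then show ?thesis using gen Cons.prems by (simp add: wd_one)
    next
      case False
      have fg: "(fa_gen g :: _ \<Rightarrow> 'r) \<in> lp_free V E r" using Cons.prems by (intro free_gen) auto
      have fv: "(wd v :: _ \<Rightarrow> 'r) \<in> lp_free V E r" using Cons.prems False by (intro free_wd) auto
      have "\<pi>' (lp_class V E s r (wd (g # v))) = \<pi>' (lp_class V E s r (fa_mult (fa_gen g) (wd v)))"
        by (simp add: wd_cons[OF False])
      also have "\<dots> = \<pi>' (lp_class V E s r (fa_gen g)) \<circ> \<pi>' (lp_class V E s r (wd v))"
        using class_mult[OF ug bs fg fv, symmetric] h_mult class_LPA[OF ug bs fg] class_LPA[OF ug bs fv]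
        by simp
      also have "\<dots> = gop r RR D f g \<circ> opw r RR D f v"
        using gen Cons False by simp
      also have "\<dots> = opw r RR D f (g # v)" using False by (cases v) auto
      finally show ?thesis .
    qed
  qed
  have zero: "\<pi>' (lp_class V E s r fa_zero) = (\<lambda>\<phi> x. 0)"
  proof -
    have fz: "(fa_zero :: ('v,'e) ugen list \<Rightarrow> 'r) \<in> lp_free V E r" by (rule free_zero)
    have "fa_smult 0 fa_zero = (fa_zero :: ('v,'e) ugen list \<Rightarrow> 'r)" by (simp add: fa_smult_def fa_zero_def)
    then have "lp_class V E s r fa_zero = LPA_smult V E s r 0 (lp_class V E s r (fa_zero :: ('v,'e) ugen list \<Rightarrow> 'r))"
      using class_smult[OF ug bs fz, of 0] by simp
    then show ?thesis using h_smult[OF class_LPA[OF ug bs fz], of 0] by simp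
  qed
  have main: "\<forall>a. a \<in> lp_free V E r \<longrightarrow> {w. a w \<noteq> 0} \<subseteq> W \<longrightarrow> \<pi>' (lp_class V E s r a) = pit r RR D f a"
    if "finite W" for W
    using that
  proof (induction W rule: finite_induct)
    case empty
    show ?case
    proof (intro allI impI)
      fix a :: "('v,'e) ugen list \<Rightarrow> 'r"
      assume "{w. a w \<noteq> 0} \<subseteq> {}"
      then have az: "a = fa_zero" by (auto simp: fa_zero_def fun_eq_iff)
      show "\<pi>' (lp_class V E s r a) = pit r RR D f a" unfolding az using zero by (simp add: pit_zero fun_eq_iff)
    qed
  next
    case (insert w W)
    show ?case
    proof (intro allI impI)
      fix a :: "('v,'e) ugen list \<Rightarrow> 'r"
      assume a: "a \<in> lp_free V E r" and sa: "{w. a w \<noteq> 0} \<subseteq> insert w W"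
      define a1 where "a1 = a(w := 0)"
      have a1: "a1 \<in> lp_free V E r" by (rule free_by[of _ a a]) (use a in \<open>auto simp: a1_def split: if_splits\<close>)
      have sa1: "{w. a1 w \<noteq> 0} \<subseteq> W" using sa by (auto simp: a1_def)
      have IH: "\<pi>' (lp_class V E s r a1) = pit r RR D f a1" using insert.IH a1 sa1 by blast
      show "\<pi>' (lp_class V E s r a) = pit r RR D f a"
      proof (cases "a w = 0")
        case True
        then have "a1 = a" by (auto simp: a1_def)
        then show ?thesis using IH by simp
      next
        case False
        then have w: "w \<noteq> []" "\<forall>g\<in>set w. valid_gen V E r g" using a by (auto simp: lp_free_def)
        have fw: "wd w \<in> lp_free V E r" using free_wd[OF w] .
        have fsw: "fa_smult (a w) (wd w) \<in> lp_free V E r" using free_smult[OF fw] .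
        have dec: "a = fa_add a1 (fa_smult (a w) (wd w))"
          by (auto simp: a1_def fa_add_def fa_smult_def wd_def fun_eq_iff)
        have "\<pi>' (lp_class V E s r a) = \<pi>' (LPA_add V E s r (lp_class V E s r a1) (lp_class V E s r (fa_smult (a w) (wd w))))"
          using class_add[OF ug bs a1 fsw] dec by simp
        also have "\<dots> = (\<lambda>\<phi> x. pit r RR D f a1 \<phi> x + a w * opw r RR D f w \<phi> x)"
          using h_add[OF class_LPA[OF ug bs a1] class_LPA[OF ug bs fsw]] IH
            class_smult[OF ug bs fw, of "a w", symmetric] h_smult[OF class_LPA[OF ug bs fw], of "a w"]
            word[OF w] by simp
        also have "\<dots> = pit r RR D f (fa_add a1 (fa_smult (a w) (wd w)))"
          by (simp add: pit_add[OF free_fs[OF a1] free_fs[OF fsw]] pit_smult[OF free_fs[OF fw]] pit_wd fun_eq_iff)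
        also have "\<dots> = pit r RR D f a" using dec by simp
        finally show ?thesis .
      qed
    qed
  qed
  show ?thesis
  proof
    fix X :: "(('v,'e) ugen list \<Rightarrow> 'r) set" assume X: "X \<in> LPA V E s r"
    obtain a where a: "a \<in> lp_free V E r" "X = lp_class V E s r a" using LPA_elem[OF ug bs X] by blast
    have "finite {w. a w \<noteq> 0}" using a by (simp add: lp_free_def)
    then have "\<pi>' X = pit r RR D f a" using main a by blast
    then show "\<pi>' X = PI r RR D f X" using PI_class[OF ug bs a(1)] a by simp
  qed
qed

end

theorem mainTheorem4:
  fixes V :: "'v set" and E :: "'e set" and s :: "'e \<Rightarrow> 'v" and r :: "'e \<Rightarrow> 'v set"
    and RR :: "'e \<Rightarrow> 'x set" and D :: "'v set \<Rightarrow> 'x set" and f :: "'e \<Rightarrow> 'x \<Rightarrow> 'x"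
  assumes "ultragraph V E s r"
    and "branching_system V E s r RR D f"
  shows "\<exists>\<pi> :: (('v, 'e) ugen list \<Rightarrow> 'r::comm_ring_1) set \<Rightarrow> ('x \<Rightarrow> 'r) \<Rightarrow> ('x \<Rightarrow> 'r).
           LPA_hom V E s r \<pi> \<and> branching_rep_on_gens V E s r RR D f \<pi>
           \<and> (\<forall>\<pi>'. LPA_hom V E s r \<pi>' \<and> branching_rep_on_gens V E s r RR D f \<pi>'
                  \<longrightarrow> (\<forall>X\<in>LPA V E s r. \<pi>' X = \<pi> X))"
  using exist_hom[OF assms] exist_gens[OF assms] uniq[OF assms] by blast


end
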